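(* Suppose $n_1,n_2,n_3,\dots$ is a sequence of positive integers with $\lim_{i\to\infty}n_i=\infty$. Then $\bigcap_{i=1}^\infty I\Lambda_{n_i}=0$.
   Context: $I\Lambda_n$ is the ideal of $\mathbb{Z}[x_1,\dots,x_n]$ generated by the polynomials that are symmetric in $x_1,\dots,x_n$ and have zero constant term; all these ideals are regarded as subsets of $\mathbb{Z}[x_1,x_2,\dots]$. *)

theory Defs
  imports Complex_Main "HOL-Library.Poly_Mapping" "HOL-Combinatorics.Permutations"
begin

text \<open>Polynomials in Z[x_1, x_2, ...]: finitely supported maps from monomials
  (finitely supported exponent vectors nat =>0 nat) to integer coefficients.\<close>
type_synonym zpoly = "(nat \<Rightarrow>\<^sub>0 nat) \<Rightarrow>\<^sub>0 int"

definition in_vars :: "nat \<Rightarrow> zpoly \<Rightarrow> bool" where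
  "in_vars n p \<longleftrightarrow> (\<forall>m \<in> Poly_Mapping.keys p. Poly_Mapping.keys m \<subseteq> {1..n})"

definition symmetric_in :: "nat \<Rightarrow> zpoly \<Rightarrow> bool" where
  "symmetric_in n p \<longleftrightarrow>
     (\<forall>\<sigma>. \<sigma> permutes {1..n} \<longrightarrow>
        (\<forall>(m::nat \<Rightarrow>\<^sub>0 nat) (m'::nat \<Rightarrow>\<^sub>0 nat). (\<forall>i. Poly_Mapping.lookup m' i = Poly_Mapping.lookup m (\<sigma> i)) \<longrightarrow> Poly_Mapping.lookup p m' = Poly_Mapping.lookup p m))"

definition sym_gen :: "nat \<Rightarrow> zpoly \<Rightarrow> bool" where
  "sym_gen n g \<longleftrightarrow> in_vars n g \<and> symmetric_in n g \<and> Poly_Mapping.lookup g 0 = 0"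

definition ILambda :: "nat \<Rightarrow> zpoly set" where
  "ILambda n = {(\<Sum>j\<in>J. a j * g j) | J a g.
      finite (J :: nat set) \<and> (\<forall>j\<in>J. in_vars n (a j) \<and> sym_gen n (g j))}"

end

theory Submission
  imports Defs
begin

type_synonym cpoly = "(nat \<Rightarrow>\<^sub>0 nat) \<Rightarrow>\<^sub>0 complex"

lemma pm_sum_single:
  fixes f :: "'a \<Rightarrow>\<^sub>0 'b::comm_monoid_add"
  assumes "finite S" "Poly_Mapping.keys f \<subseteq> S"
  shows "f = (\<Sum>x\<in>S. Poly_Mapping.single x (Poly_Mapping.lookup f x))"
proof (rule poly_mapping_eqI)
  fix k
  have "(\<Sum>x\<in>S. Poly_Mapping.lookup (Poly_Mapping.single x (Poly_Mapping.lookup f x)) k)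
        = (\<Sum>x\<in>S. if x = k then Poly_Mapping.lookup f k else 0)"
    by (intro sum.cong) (auto simp: lookup_single)
  also have "\<dots> = Poly_Mapping.lookup f k"
    using assms by (auto simp: in_keys_iff)
  finally show "Poly_Mapping.lookup f k = Poly_Mapping.lookup (\<Sum>x\<in>S. Poly_Mapping.single x (Poly_Mapping.lookup f x)) k"
    by (simp add: lookup_sum)
qed

definition tdeg :: "(nat \<Rightarrow>\<^sub>0 nat) \<Rightarrow> nat" where
  "tdeg m = (\<Sum>i\<in>Poly_Mapping.keys m. Poly_Mapping.lookup m i)"

lemma tdeg_sup: "finite S \<Longrightarrow> Poly_Mapping.keys m \<subseteq> S \<Longrightarrow> tdeg m = (\<Sum>i\<in>S. Poly_Mapping.lookup m i)"
  unfolding tdeg_def by (rule sum.mono_neutral_left) (auto simp: in_keys_iff)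

lemma tdeg_add: "tdeg (a + b) = tdeg a + tdeg b"
proof -
  let ?S = "Poly_Mapping.keys a \<union> Poly_Mapping.keys b"
  have "tdeg (a+b) = (\<Sum>i\<in>?S. Poly_Mapping.lookup (a+b) i)"
    by (rule tdeg_sup) (auto simp: in_keys_iff lookup_add)
  also have "\<dots> = (\<Sum>i\<in>?S. Poly_Mapping.lookup a i) + (\<Sum>i\<in>?S. Poly_Mapping.lookup b i)"
    by (simp add: lookup_add sum.distrib)
  also have "\<dots> = tdeg a + tdeg b"
    using tdeg_sup[of ?S a] tdeg_sup[of ?S b] by simp
  finally show ?thesis .
qed

lemma tdeg_zero [simp]: "tdeg 0 = 0" by (simp add: tdeg_def)

lemma tdeg_single [simp]: "tdeg (Poly_Mapping.single j n) = n"
  by (simp add: tdeg_def)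

lemma tdeg_sum: "tdeg (sum h S) = (\<Sum>i\<in>S. tdeg (h i))"
  by (induction S rule: infinite_finite_induct) (auto simp: tdeg_add)

lemma tdeg_eq_0: "tdeg m = 0 \<Longrightarrow> m = 0"
  unfolding tdeg_def by (auto simp: in_keys_iff poly_mapping_eqI)

definition Bm :: "(nat \<Rightarrow> nat) \<Rightarrow> (nat \<Rightarrow>\<^sub>0 nat) \<Rightarrow> (nat \<Rightarrow>\<^sub>0 nat)" where
  "Bm b m = (\<Sum>i\<in>Poly_Mapping.keys m. Poly_Mapping.single (b i) (Poly_Mapping.lookup m i))"

lemma Bm_sup: "finite S \<Longrightarrow> Poly_Mapping.keys m \<subseteq> S \<Longrightarrow>
   Bm b m = (\<Sum>i\<in>S. Poly_Mapping.single (b i) (Poly_Mapping.lookup m i))"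
  unfolding Bm_def by (rule sum.mono_neutral_left) (auto simp: in_keys_iff)

lemma Bm_add: "Bm b (x + y) = Bm b x + Bm b y"
proof -
  let ?S = "Poly_Mapping.keys x \<union> Poly_Mapping.keys y"
  have "Bm b (x+y) = (\<Sum>i\<in>?S. Poly_Mapping.single (b i) (Poly_Mapping.lookup (x+y) i))"
    by (rule Bm_sup) (auto simp: in_keys_iff lookup_add)
  also have "\<dots> = (\<Sum>i\<in>?S. Poly_Mapping.single (b i) (Poly_Mapping.lookup x i)) + (\<Sum>i\<in>?S. Poly_Mapping.single (b i) (Poly_Mapping.lookup y i))"
    by (simp add: lookup_add sum.distrib single_add)
  also have "\<dots> = Bm b x + Bm b y"
    using Bm_sup[of ?S x b] Bm_sup[of ?S y b] by simp
  finally show ?thesis .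
qed

lemma tdeg_Bm: "tdeg (Bm b m) = tdeg m"
  unfolding Bm_def tdeg_sum tdeg_single by (simp add: tdeg_def)

definition wt :: "(nat \<Rightarrow> complex) \<Rightarrow> (nat \<Rightarrow>\<^sub>0 nat) \<Rightarrow> complex" where
  "wt c m = (\<Prod>i\<in>Poly_Mapping.keys m. c i ^ Poly_Mapping.lookup m i)"

lemma wt_sup: "finite S \<Longrightarrow> Poly_Mapping.keys m \<subseteq> S \<Longrightarrow>
   wt c m = (\<Prod>i\<in>S. c i ^ Poly_Mapping.lookup m i)"
  unfolding wt_def by (rule prod.mono_neutral_left) (auto simp: in_keys_iff)

lemma wt_add: "wt c (x + y) = wt c x * wt c y"
proof -
  let ?S = "Poly_Mapping.keys x \<union> Poly_Mapping.keys y"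
  have "wt c (x+y) = (\<Prod>i\<in>?S. c i ^ Poly_Mapping.lookup (x+y) i)"
    by (rule wt_sup) (auto simp: in_keys_iff lookup_add)
  also have "\<dots> = (\<Prod>i\<in>?S. c i ^ Poly_Mapping.lookup x i) * (\<Prod>i\<in>?S. c i ^ Poly_Mapping.lookup y i)"
    by (simp add: lookup_add prod.distrib power_add)
  also have "\<dots> = wt c x * wt c y"
    using wt_sup[of ?S x c] wt_sup[of ?S y c] by simp
  finally show ?thesis .
qed

definition phi :: "(nat \<Rightarrow> nat) \<Rightarrow> (nat \<Rightarrow> complex) \<Rightarrow> zpoly \<Rightarrow> cpoly" where
  "phi b c f = (\<Sum>m\<in>Poly_Mapping.keys f. Poly_Mapping.single (Bm b m) (of_int (Poly_Mapping.lookup f m) * wt c m))"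

lemma phi_sup: "finite S \<Longrightarrow> Poly_Mapping.keys f \<subseteq> S \<Longrightarrow>
   phi b c f = (\<Sum>m\<in>S. Poly_Mapping.single (Bm b m) (of_int (Poly_Mapping.lookup f m) * wt c m))"
  unfolding phi_def by (rule sum.mono_neutral_left) (auto simp: in_keys_iff)

lemma phi_add: "phi b c (x + y) = phi b c x + phi b c y"
proof -
  let ?S = "Poly_Mapping.keys x \<union> Poly_Mapping.keys y"
  have "phi b c (x+y) = (\<Sum>m\<in>?S. Poly_Mapping.single (Bm b m) (of_int (Poly_Mapping.lookup (x+y) m) * wt c m))"
    by (rule phi_sup) (auto simp: in_keys_iff lookup_add)
  also have "\<dots> = (\<Sum>m\<in>?S. Poly_Mapping.single (Bm b m) (of_int (Poly_Mapping.lookup x m) * wt c m))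
     + (\<Sum>m\<in>?S. Poly_Mapping.single (Bm b m) (of_int (Poly_Mapping.lookup y m) * wt c m))"
    by (simp add: lookup_add sum.distrib single_add distrib_right)
  also have "\<dots> = phi b c x + phi b c y"
    using phi_sup[of ?S x b c] phi_sup[of ?S y b c] by simp
  finally show ?thesis .
qed

lemma phi_zero [simp]: "phi b c 0 = 0" by (simp add: phi_def)

lemma phi_sum: "phi b c (sum h S) = (\<Sum>i\<in>S. phi b c (h i))"
  by (induction S rule: infinite_finite_induct) (auto simp: phi_add)

lemma phi_single: "phi b c (Poly_Mapping.single m a) = Poly_Mapping.single (Bm b m) (of_int a * wt c m)"
  by (cases "a = 0") (simp_all add: phi_def)

lemma phi_mult: "phi b c (x * y) = phi b c x * phi b c y"
proof -
  let ?X = "Poly_Mapping.keys x" and ?Y = "Poly_Mapping.keys y"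
  have x: "x = (\<Sum>m\<in>?X. Poly_Mapping.single m (Poly_Mapping.lookup x m))"
    by (rule pm_sum_single) auto
  have y: "y = (\<Sum>m\<in>?Y. Poly_Mapping.single m (Poly_Mapping.lookup y m))"
    by (rule pm_sum_single) auto
  have "x * y = (\<Sum>m\<in>?X. \<Sum>l\<in>?Y. Poly_Mapping.single m (Poly_Mapping.lookup x m) * Poly_Mapping.single l (Poly_Mapping.lookup y l))"
    by (subst x, subst y) (rule sum_product)
  then have "phi b c (x * y) = (\<Sum>m\<in>?X. \<Sum>l\<in>?Y. phi b c (Poly_Mapping.single (m + l) (Poly_Mapping.lookup x m * Poly_Mapping.lookup y l)))"
    by (simp add: phi_sum mult_single)
  also have "\<dots> = (\<Sum>m\<in>?X. \<Sum>l\<in>?Y. Poly_Mapping.single (Bm b m) (of_int (Poly_Mapping.lookup x m) * wt c m) * Poly_Mapping.single (Bm b l) (of_int (Poly_Mapping.lookup y l) * wt c l))"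
    by (simp add: phi_single mult_single Bm_add wt_add mult_ac)
  also have "\<dots> = phi b c x * phi b c y"
    by (simp add: phi_def sum_product)
  finally show ?thesis .
qed

lemma lookup_phi: "Poly_Mapping.lookup (phi b c f) n =
   (\<Sum>m\<in>{m\<in>Poly_Mapping.keys f. Bm b m = n}. of_int (Poly_Mapping.lookup f m) * wt c m)"
  unfolding phi_def lookup_sum lookup_single
  by (rule sum.mono_neutral_cong_right) auto

lemma lookup_mult_zero:
  fixes F G :: cpoly
  assumes "\<forall>n\<in>Poly_Mapping.keys G. tdeg n \<ge> M" "tdeg n0 < M"
  shows "Poly_Mapping.lookup (F * G) n0 = 0"
proof (rule ccontr)
  assume "Poly_Mapping.lookup (F * G) n0 \<noteq> 0"
  then have "n0 \<in> Poly_Mapping.keys (F * G)" by (simp add: in_keys_iff)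
  then obtain a d where "n0 = a + d" "d \<in> Poly_Mapping.keys G"
    using keys_mult by blast
  then show False using assms by (auto simp: tdeg_add)
qed


definition Rm :: "(nat \<Rightarrow> nat) \<Rightarrow> (nat \<Rightarrow>\<^sub>0 nat) \<Rightarrow> (nat \<Rightarrow>\<^sub>0 nat)" where
  "Rm \<tau> m = Abs_poly_mapping (\<lambda>i. Poly_Mapping.lookup m (\<tau> i))"

lemma lookup_Rm:
  assumes "\<tau> permutes A"
  shows "Poly_Mapping.lookup (Rm \<tau> m) i = Poly_Mapping.lookup m (\<tau> i)"
proof -
  have "{i. Poly_Mapping.lookup m (\<tau> i) \<noteq> 0} = \<tau> -` Poly_Mapping.keys m"
    by (auto simp: in_keys_iff)
  moreover have "finite (\<tau> -` Poly_Mapping.keys m)"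
    using permutes_inj[OF assms] by (intro finite_vimageI) auto
  ultimately show ?thesis unfolding Rm_def by simp
qed

lemma phi_sym:
  fixes g :: zpoly
  assumes sg: "sym_gen N g" and tp: "\<tau> permutes {1..N}"
    and bt: "\<And>i. i \<in> {1..N} \<Longrightarrow> b (\<tau> i) = b i"
    and ct: "\<And>i. i \<in> {1..N} \<Longrightarrow> c (\<tau> i) = z * c i"
    and zt: "\<And>t. 0 < t \<Longrightarrow> t < M \<Longrightarrow> z ^ t \<noteq> 1"
  shows "\<forall>n\<in>Poly_Mapping.keys (phi b c g). tdeg n \<ge> M"
proof
  fix n assume nk: "n \<in> Poly_Mapping.keys (phi b c g)"
  define S where "S = {m\<in>Poly_Mapping.keys g. Bm b m = n}"
  define L where "L = (\<Sum>m\<in>S. of_int (Poly_Mapping.lookup g m) * wt c m :: complex)"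
  have LL: "Poly_Mapping.lookup (phi b c g) n = L"
    unfolding L_def S_def by (rule lookup_phi)
  have iv: "in_vars N g" and sy: "symmetric_in N g" and g0: "Poly_Mapping.lookup g 0 = 0"
    using sg by (auto simp: sym_gen_def)
  have fS: "finite S" unfolding S_def by auto
  have tS: "tdeg m = tdeg n" if "m \<in> S" for m
    using that tdeg_Bm[of b m] by (auto simp: S_def)
  have kS: "Poly_Mapping.keys m \<subseteq> {1..N}" if "m \<in> S" for m
    using that iv by (auto simp: S_def in_vars_def)
  have bij: "bij_betw \<tau> {1..N} {1..N}" using tp by (rule permutes_imp_bij)
  have kR: "Poly_Mapping.keys (Rm \<tau> m) \<subseteq> {1..N}" if "m \<in> S" for m
  proof
    fix i assume "i \<in> Poly_Mapping.keys (Rm \<tau> m)"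
    then have "Poly_Mapping.lookup m (\<tau> i) \<noteq> 0" by (simp add: in_keys_iff lookup_Rm[OF tp])
    show "i \<in> {1..N}"
    proof (rule ccontr)
      assume "i \<notin> {1..N}"
      then have "\<tau> i = i" using tp by (simp add: permutes_not_in)
      then show False using \<open>Poly_Mapping.lookup m (\<tau> i) \<noteq> 0\<close> kS[OF that] \<open>i \<notin> {1..N}\<close>
        by (metis in_keys_iff subsetD)
    qed
  qed
  have gR: "Poly_Mapping.lookup g (Rm \<tau> m) = Poly_Mapping.lookup g m" for m
    using sy tp unfolding symmetric_in_def by (simp add: lookup_Rm[OF tp])
  have BR: "Bm b (Rm \<tau> m) = Bm b m" if "m \<in> S" for m
  proof -
    have "Bm b (Rm \<tau> m) = (\<Sum>i\<in>{1..N}. Poly_Mapping.single (b i) (Poly_Mapping.lookup m (\<tau> i)))"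
      using Bm_sup[OF _ kR[OF that]] by (simp add: lookup_Rm[OF tp])
    also have "\<dots> = (\<Sum>i\<in>{1..N}. Poly_Mapping.single (b (\<tau> i)) (Poly_Mapping.lookup m (\<tau> i)))"
      by (intro sum.cong) (auto simp: bt)
    also have "\<dots> = (\<Sum>i\<in>{1..N}. Poly_Mapping.single (b i) (Poly_Mapping.lookup m i))"
      using sum.reindex_bij_betw[OF bij, of "\<lambda>i. Poly_Mapping.single (b i) (Poly_Mapping.lookup m i)"] by simp
    also have "\<dots> = Bm b m" using Bm_sup[OF _ kS[OF that]] by simp
    finally show ?thesis .
  qed
  have wR: "wt c m = z ^ tdeg m * wt c (Rm \<tau> m)" if "m \<in> S" for m
  proof -
    have "wt c m = (\<Prod>i\<in>{1..N}. c i ^ Poly_Mapping.lookup m i)"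
      using wt_sup[OF _ kS[OF that]] by simp
    also have "\<dots> = (\<Prod>i\<in>{1..N}. c (\<tau> i) ^ Poly_Mapping.lookup m (\<tau> i))"
      using prod.reindex_bij_betw[OF bij, of "\<lambda>i. c i ^ Poly_Mapping.lookup m i"] by simp
    also have "\<dots> = (\<Prod>i\<in>{1..N}. z ^ Poly_Mapping.lookup m (\<tau> i) * c i ^ Poly_Mapping.lookup m (\<tau> i))"
      by (intro prod.cong) (auto simp: ct power_mult_distrib)
    also have "\<dots> = z ^ (\<Sum>i\<in>{1..N}. Poly_Mapping.lookup m (\<tau> i)) * (\<Prod>i\<in>{1..N}. c i ^ Poly_Mapping.lookup m (\<tau> i))"
      by (simp add: prod.distrib power_sum)
    also have "(\<Sum>i\<in>{1..N}. Poly_Mapping.lookup m (\<tau> i)) = (\<Sum>i\<in>{1..N}. Poly_Mapping.lookup m i)"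
      using sum.reindex_bij_betw[OF bij, of "\<lambda>i. Poly_Mapping.lookup m i"] by simp
    also have "\<dots> = tdeg m" using tdeg_sup[OF _ kS[OF that]] by simp
    also have "(\<Prod>i\<in>{1..N}. c i ^ Poly_Mapping.lookup m (\<tau> i)) = wt c (Rm \<tau> m)"
      using wt_sup[OF _ kR[OF that]] by (simp add: lookup_Rm[OF tp])
    finally show ?thesis .
  qed
  have RS: "Rm \<tau> m \<in> S" if "m \<in> S" for m
    using that gR BR by (auto simp: S_def in_keys_iff)
  have injR: "inj_on (Rm \<tau>) S"
  proof
    fix x y assume "x \<in> S" "y \<in> S" "Rm \<tau> x = Rm \<tau> y"
    then have "\<forall>i. Poly_Mapping.lookup x (\<tau> i) = Poly_Mapping.lookup y (\<tau> i)"
      by (metis lookup_Rm[OF tp])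
    then have "\<forall>j. Poly_Mapping.lookup x j = Poly_Mapping.lookup y j"
      using permutes_surj[OF tp] by (metis surj_f_inv_f)
    then show "x = y" by (simp add: poly_mapping_eqI)
  qed
  have imR: "Rm \<tau> ` S = S"
    using endo_inj_surj[OF fS _ injR] RS by auto
  show "tdeg n \<ge> M"
  proof (rule ccontr)
    assume lt: "\<not> M \<le> tdeg n"
    have "L = 0"
    proof (cases "tdeg n = 0")
      case True
      have "S = {}"
      proof (rule ccontr)
        assume "S \<noteq> {}"
        then obtain m where m: "m \<in> S" by auto
        then have "m = 0" using tS[OF m] True tdeg_eq_0 by simp
        then show False using m g0 by (simp add: S_def in_keys_iff)
      qed
      then show ?thesis by (simp add: L_def)
    next
      case False
      have "L = (\<Sum>m\<in>S. of_int (Poly_Mapping.lookup g m) * (z ^ tdeg n * wt c (Rm \<tau> m)))"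
        unfolding L_def by (intro sum.cong) (auto simp: wR tS)
      also have "\<dots> = z ^ tdeg n * (\<Sum>m\<in>S. of_int (Poly_Mapping.lookup g (Rm \<tau> m)) * wt c (Rm \<tau> m))"
        by (simp add: sum_distrib_left gR mult_ac)
      also have "(\<Sum>m\<in>S. of_int (Poly_Mapping.lookup g (Rm \<tau> m)) * wt c (Rm \<tau> m)) = L"
        unfolding L_def using sum.reindex[OF injR, of "\<lambda>m. of_int (Poly_Mapping.lookup g m) * wt c m"] imR
        by simp
      finally have "L * (1 - z ^ tdeg n) = 0" by (simp add: algebra_simps)
      moreover have "z ^ tdeg n \<noteq> 1" using zt False lt by simp
      ultimately show ?thesis by simp
    qed
    then show False using nk LL by (simp add: in_keys_iff)
  qed
qed


lemma root_unity_ne: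
  fixes M :: nat
  assumes "0 < t" "t < M"
  shows "cis (2 * pi / M) ^ t \<noteq> 1"
proof
  assume h: "cis (2 * pi / M) ^ t = 1"
  have M: "M > 0" using assms by simp
  have "cis (2 * pi / M) ^ t = cis (2 * pi * real t / real M)"
    by (simp add: DeMoivre mult_ac)
  moreover have "cis (2 * pi * real 0 / real M) = 1" by simp
  ultimately have "cis (2 * pi * real t / real M) = cis (2 * pi * real 0 / real M)" using h by simp
  moreover have "inj_on (\<lambda>k. cis (2 * pi * real k / real M)) {..<M}"
    using bij_betw_roots_unity[OF M] unfolding bij_betw_def by (rule conjunct1)
  ultimately have "t = 0"
    using assms inj_onD[of "\<lambda>k. cis (2 * pi * real k / real M)" "{..<M}" t 0] by simp
  then show False using assms by simp
qed

lemma cis_pow_mod: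
  fixes M :: nat assumes "M > 0"
  shows "cis (2 * pi / M) ^ (x mod M) = cis (2 * pi / M) ^ x"
proof -
  define z where "z = cis (2 * pi / M)"
  have zM: "z ^ M = 1"
    using assms unfolding z_def by (simp add: DeMoivre)
  have "z ^ x = z ^ (M * (x div M) + x mod M)" by simp
  also have "\<dots> = (z ^ M) ^ (x div M) * z ^ (x mod M)"
    by (simp only: power_add power_mult)
  also have "\<dots> = z ^ (x mod M)" by (simp add: zM)
  finally show ?thesis unfolding z_def by simp
qed

theorem lemma3p3:
  fixes n :: "nat \<Rightarrow> nat"
  assumes "\<And>i. i \<ge> 1 \<Longrightarrow> n i > 0"
    and "filterlim n at_top sequentially"
  shows "(\<Inter>i\<in>{1..}. ILambda (n i)) = {0}"
proof -
  have zero: "0 \<in> ILambda N" for N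
    unfolding ILambda_def by (rule CollectI, rule exI[of _ "{}"]) auto
  have main: "p = 0" if pin: "\<And>i. i \<ge> 1 \<Longrightarrow> p \<in> ILambda (n i)" for p
  proof (rule ccontr)
    assume "p \<noteq> 0"
    then obtain \<nu>0 where \<nu>0: "\<nu>0 \<in> Poly_Mapping.keys p"
      by (metis keys_eq_empty ex_in_conv)
    define M where "M = tdeg \<nu>0 + 1"
    define V where "V = (\<Union>m\<in>Poly_Mapping.keys p. Poly_Mapping.keys m)"
    define k where "k = Max (insert 1 V)"
    have fV: "finite V" unfolding V_def by auto
    have k1: "k \<ge> 1" unfolding k_def using fV by simp
    have kV: "x \<le> k" if "x \<in> V" for x unfolding k_def using fV that by simp
    have M1: "M \<ge> 1" unfolding M_def by simp
    define K where "K = k * M"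
    have kK: "k \<le> K" unfolding K_def using M1 by simp
    obtain i0 where i0: "\<forall>i\<ge>i0. K \<le> n i"
      using assms(2) unfolding filterlim_at_top eventually_sequentially by blast
    define N where "N = n (i0 + 1)"
    have KN: "K \<le> N" unfolding N_def using i0 by simp
    have pN: "p \<in> ILambda N" unfolding N_def using pin by simp
    define z where "z = cis (2 * pi / M)"
    define b where "b = (\<lambda>i::nat. if 1 \<le> i \<and> i \<le> K then (i - 1) mod k + 1 else i)"
    define c where "c = (\<lambda>i::nat. if i = 0 then 1 else if i \<le> K then z ^ ((i - 1) div k) else 0)"
    define \<tau> where "\<tau> = (\<lambda>i::nat. if 1 \<le> i \<and> i \<le> K then (i - 1 + k) mod K + 1 else i)"
    have Kpos: "K > 0" using kK k1 by simp
    have \<tau>in: "\<tau> i \<in> {1..K}" if "i \<in> {1..K}" for i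
    proof -
      have "(i - 1 + k) mod K < K" using Kpos by simp
      then show ?thesis using that Kpos by (simp add: \<tau>_def Suc_le_eq)
    qed
    have inj\<tau>: "inj_on \<tau> {1..K}"
    proof
      fix x y assume xy: "x \<in> {1..K}" "y \<in> {1..K}" "\<tau> x = \<tau> y"
      then have e: "(x - 1 + k) mod K = (y - 1 + k) mod K" by (simp add: \<tau>_def)
      have ex: "(u - 1 + k + (K - k)) mod K = u - 1" if "u \<in> {1..K}" for u
      proof -
        have "u - 1 + k + (K - k) = (u - 1) + K" using kK by arith
        moreover have "u - 1 < K" using that by auto
        ultimately show ?thesis by simp
      qed
      have "x - 1 = (x - 1 + k + (K - k)) mod K" using ex xy by simp
      also have "\<dots> = ((x - 1 + k) mod K + (K - k)) mod K" by (simp add: mod_add_left_eq)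
      also have "\<dots> = ((y - 1 + k) mod K + (K - k)) mod K" using e by simp
      also have "\<dots> = (y - 1 + k + (K - k)) mod K" by (simp add: mod_add_left_eq)
      also have "\<dots> = y - 1" using ex xy by simp
      finally show "x = y" using xy by auto
    qed
    have "\<tau> ` {1..K} \<subseteq> {1..K}" using \<tau>in by blast
    then have "\<tau> ` {1..K} = {1..K}" using endo_inj_surj[OF _ _ inj\<tau>] by blast
    then have "bij_betw \<tau> {1..K} {1..K}" using inj\<tau> by (simp add: bij_betw_def)
    then have "\<tau> permutes {1..K}"
      by (rule bij_imp_permutes) (auto simp: \<tau>_def)
    then have tp: "\<tau> permutes {1..N}"
      by (rule permutes_subset) (use KN in auto)
    have bt: "b (\<tau> i) = b i" if "i \<in> {1..N}" for i
    proof (cases "i \<le> K")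
      case True
      then have "\<tau> i \<in> {1..K}" using \<tau>in that by simp
      then have "b (\<tau> i) = (\<tau> i - 1) mod k + 1" by (simp add: b_def)
      also have "\<dots> = ((i - 1 + k) mod K) mod k + 1" using True that by (simp add: \<tau>_def)
      also have "\<dots> = (i - 1) mod k + 1" by (simp add: K_def mod_mod_cancel)
      finally show ?thesis using True that by (simp add: b_def)
    qed (simp add: \<tau>_def)
    have ct: "c (\<tau> i) = z * c i" if "i \<in> {1..N}" for i
    proof (cases "i \<le> K")
      case True
      then have "\<tau> i \<in> {1..K}" using \<tau>in that by simp
      then have "c (\<tau> i) = z ^ ((\<tau> i - 1) div k)" by (simp add: c_def)
      also have "(\<tau> i - 1) div k = ((i - 1 + k) mod (k * M)) div k" using True that by (simp add: \<tau>_def K_def)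
      also have "\<dots> = ((i - 1 + k) div k) mod M" using k1 by (simp add: mod_mult2_eq)
      also have "(i - 1 + k) div k = (i - 1) div k + 1" using k1 by simp
      also have "z ^ (((i - 1) div k + 1) mod M) = z ^ ((i - 1) div k + 1)"
        unfolding z_def using M1 by (simp add: cis_pow_mod)
      finally show ?thesis using True that by (simp add: c_def)
    qed (use that in \<open>simp add: \<tau>_def c_def\<close>)
    have zt: "z ^ t \<noteq> 1" if "0 < t" "t < M" for t
      unfolding z_def using root_unity_ne that by blast
    obtain J a g where pJ: "p = (\<Sum>j\<in>J. a j * g j)" and fJ: "finite (J::nat set)"
      and ag: "\<forall>j\<in>J. in_vars N (a j) \<and> sym_gen N (g j)"
      using pN unfolding ILambda_def mem_Collect_eq by blast
    have "Poly_Mapping.lookup (phi b c p) \<nu>0 = (\<Sum>j\<in>J. Poly_Mapping.lookup (phi b c (a j) * phi b c (g j)) \<nu>0)"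
      unfolding pJ phi_sum phi_mult lookup_sum ..
    also have "\<dots> = 0"
    proof (intro sum.neutral ballI)
      fix j assume "j \<in> J"
      then have "sym_gen N (g j)" using ag by blast
      from phi_sym[where b=b and c=c and z=z and M=M, OF this tp bt ct zt]
      show "Poly_Mapping.lookup (phi b c (a j) * phi b c (g j)) \<nu>0 = 0"
        by (intro lookup_mult_zero) (auto simp: M_def)
    qed
    finally have z0: "Poly_Mapping.lookup (phi b c p) \<nu>0 = 0" .
    have small: "b i = i \<and> c i = 1" if "i \<le> k" for i
      using that kK by (auto simp: b_def c_def)
    have Bid: "Bm b m = m \<and> wt c m = 1" if "m \<in> Poly_Mapping.keys p" for m
    proof -
      have km: "i \<le> k" if "i \<in> Poly_Mapping.keys m" for i
        using kV that \<open>m \<in> Poly_Mapping.keys p\<close> by (auto simp: V_def)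
      have "Bm b m = (\<Sum>i\<in>Poly_Mapping.keys m. Poly_Mapping.single i (Poly_Mapping.lookup m i))"
        unfolding Bm_def by (intro sum.cong) (auto simp: small km)
      also have "\<dots> = m" by (rule pm_sum_single[symmetric]) auto
      finally show ?thesis unfolding wt_def by (auto simp: small km)
    qed
    have "Poly_Mapping.lookup (phi b c p) \<nu>0 =
       (\<Sum>m\<in>{m\<in>Poly_Mapping.keys p. Bm b m = \<nu>0}. of_int (Poly_Mapping.lookup p m) * wt c m)"
      by (rule lookup_phi)
    also have "{m\<in>Poly_Mapping.keys p. Bm b m = \<nu>0} = {\<nu>0}" using Bid \<nu>0 by auto
    also have "(\<Sum>m\<in>{\<nu>0}. of_int (Poly_Mapping.lookup p m) * wt c m) = of_int (Poly_Mapping.lookup p \<nu>0)"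
      using Bid \<nu>0 by simp
    finally have "Poly_Mapping.lookup (phi b c p) \<nu>0 \<noteq> 0" using \<nu>0 by (simp add: in_keys_iff)
    then show False using z0 by simp
  qed
  show ?thesis
  proof
    show "(\<Inter>i\<in>{1..}. ILambda (n i)) \<subseteq> {0}" using main by auto
    show "{0} \<subseteq> (\<Inter>i\<in>{1..}. ILambda (n i))" using zero by auto
  qed
qed

end
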